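(* Let $E$ be a finite set, $V \subset \mathbb R^E$ a linear subspace with oriented matroid $M$, and $Y_V$ its matroid Schubert variety. If $F \subset G \subset E$ are flats of $M$, then \[ Y_V \cap (0^F \times \mathbb R_{>0}^{G\setminus F} \times \infty^{E \setminus G}) = \big(\pi_G(V) \cap (0^F \times \mathbb R_{>0}^{G\setminus F})\big) \times \infty^{E \setminus G}. \] In particular, $Y_V \cap (0^F \times \mathbb R_{>0}^{G \setminus F} \times \infty^{E \setminus G})$ is nonempty if and only if $F$ is an acyclic flat of $M|_G$.
   Context: $\mathbb P^1_{\mathbb R} = \mathbb R \cup\{\infty\}$; $Y_V$ is the Zariski closure of $V$ in $(\mathbb P^1_{\mathbb R})^E$. Notation $0^A \times S^B \times \infty^C$ (for a partition $E = A\sqcup B\sqcup C$) means points whose coordinates are $0$ on $A$, in $S$ on $B$, and $\infty$ on $C$; similarly in $\mathbb R^G$. $\pi_G:\mathbb R^E \to \mathbb R^G$ is the coordinate projection. The oriented matroid $M$ of $V$ has covectors the sign vectors $s(v)\in\{-,0,+\}^E$ of $v \in V$; flats are zero sets of covectors. $M|_G$ is the oriented matroid on $G$ with covectors the restrictions to $G$ of covectors of $M$ (equivalently the oriented matroid of $\pi_G(V)$). $F$ is an acyclic flat of $M|_G$ if the sign vector that is $0$ on $F$ and $+$ on $G\setminus F$ is a covector of $M|_G$. *)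

theory Defs
  imports "HOL-Analysis.Analysis"
begin

datatype pone = Fin real | Infty

text \<open>Fixed homogeneous coordinates: Fin r \<mapsto> [r : 1], Infty \<mapsto> [1 : 0].\<close>
fun hx :: "pone \<Rightarrow> real" where
  "hx (Fin r) = r" | "hx Infty = 1"
fun hy :: "pone \<Rightarrow> real" where
  "hy (Fin r) = 1" | "hy Infty = 0"

text \<open>A multihomogeneous polynomial in variables (x_e, y_e), e \<in> E, of multidegree d,
  given by a finite set S of exponent vectors a (exponent a e of x_e, d e - a e of y_e)
  with coefficients c.\<close>
definition mh_poly :: "('e::finite \<Rightarrow> nat) \<Rightarrow> ('e \<Rightarrow> nat) set \<Rightarrow> bool" where
  "mh_poly d S \<longleftrightarrow> finite S \<and> (\<forall>a\<in>S. \<forall>e. a e \<le> d e)"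

definition mh_eval ::
  "('e::finite \<Rightarrow> nat) \<Rightarrow> ('e \<Rightarrow> nat) set \<Rightarrow> (('e \<Rightarrow> nat) \<Rightarrow> real) \<Rightarrow> ('e \<Rightarrow> pone) \<Rightarrow> real" where
  "mh_eval d S c p = (\<Sum>a\<in>S. c a * (\<Prod>e\<in>UNIV. hx (p e) ^ a e * hy (p e) ^ (d e - a e)))"

definition zariski_closure_P1 :: "('e::finite \<Rightarrow> pone) set \<Rightarrow> ('e \<Rightarrow> pone) set" where
  "zariski_closure_P1 A = {p. \<forall>d S c. mh_poly d S \<and> (\<forall>q\<in>A. mh_eval d S c q = 0)
                                      \<longrightarrow> mh_eval d S c p = 0}"

definition embed_P1 :: "real ^ 'e \<Rightarrow> ('e \<Rightarrow> pone)" where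
  "embed_P1 v = (\<lambda>e. Fin (v $ e))"

definition schubert_variety :: "(real ^ 'e::finite) set \<Rightarrow> ('e \<Rightarrow> pone) set" where
  "schubert_variety V = zariski_closure_P1 (embed_P1 ` V)"

datatype sign = Neg | Zero | Pos

definition sign_of :: "real \<Rightarrow> sign" where
  "sign_of r = (if r < 0 then Neg else if r = 0 then Zero else Pos)"

definition sign_vec :: "real ^ 'e \<Rightarrow> ('e \<Rightarrow> sign)" where
  "sign_vec v = (\<lambda>e. sign_of (v $ e))"

definition covectors :: "(real ^ 'e) set \<Rightarrow> ('e \<Rightarrow> sign) set" where
  "covectors V = sign_vec ` V"

definition is_flat :: "(real ^ 'e) set \<Rightarrow> 'e set \<Rightarrow> bool" where
  "is_flat V F \<longleftrightarrow> (\<exists>X\<in>covectors V. F = {e. X e = Zero})"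

definition restr_covectors :: "(real ^ 'e) set \<Rightarrow> 'e set \<Rightarrow> ('e \<Rightarrow> sign option) set" where
  "restr_covectors V G = (\<lambda>X. \<lambda>e. if e \<in> G then Some (X e) else None) ` covectors V"

definition acyclic_flat_restr :: "(real ^ 'e) set \<Rightarrow> 'e set \<Rightarrow> 'e set \<Rightarrow> bool" where
  "acyclic_flat_restr V G F \<longleftrightarrow> F \<subseteq> G \<and>
     (\<lambda>e. if e \<in> G then Some (if e \<in> F then Zero else Pos) else None) \<in> restr_covectors V G"

end

theory Submission
  imports Defs
begin

lemma eval_embed:
  "mh_eval d S c (embed_P1 w) = (\<Sum>a\<in>S. c a * (\<Prod>e\<in>UNIV. (w $ e) ^ a e))"
  by (simp add: mh_eval_def embed_P1_def)

lemma flat_witness: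
  assumes "is_flat V G"
  obtains u where "u \<in> V" "\<And>e. u $ e = 0 \<longleftrightarrow> e \<in> G"
proof -
  from assms obtain u where "u \<in> V" "G = {e. sign_of (u $ e) = Zero}"
    by (auto simp: is_flat_def covectors_def sign_vec_def)
  then show ?thesis using that by (auto simp: sign_of_def)
qed

lemma sup_part:
  assumes V: "subspace V" and fl: "is_flat V G" and v: "v \<in> V"
    and p: "\<And>e. p e = (if e \<in> G then Fin (v $ e) else Infty)"
  shows "p \<in> schubert_variety V"
  unfolding schubert_variety_def zariski_closure_P1_def
proof (intro CollectI allI impI, elim conjE)
  fix d S c
  assume mh: "mh_poly d S" and van: "\<forall>q\<in>embed_P1 ` V. mh_eval d S c q = 0"
  obtain u where u: "u \<in> V" "\<And>e. u $ e = 0 \<longleftrightarrow> e \<in> G" using flat_witness[OF fl] by blast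
  define X where "X e = (if e \<in> G then v $ e else 1)" for e
  define lam where "lam s e = (if e \<in> G then 1 else s / (s * v $ e + u $ e))" for s :: real and e
  define H where "H s = (\<Sum>a\<in>S. c a * (\<Prod>e\<in>UNIV. (X e) ^ a e * (lam s e) ^ (d e - a e)))" for s
  have H0: "H 0 = mh_eval d S c p"
  proof -
    have "hx (p e) = X e" "hy (p e) = lam 0 e" for e
      using p[of e] by (auto simp: X_def lam_def)
    then show ?thesis by (simp add: H_def mh_eval_def)
  qed
  have cl: "isCont (\<lambda>s. lam s e) 0" for e
  proof (cases "e \<in> G")
    case True then show ?thesis by (simp add: lam_def)
  next
    case False
    then have "u $ e \<noteq> 0" using u by auto
    then have "isCont (\<lambda>s. s / (s * v $ e + u $ e)) 0"
      by (intro continuous_intros) auto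
    then show ?thesis using False by (simp add: lam_def)
  qed
  have "isCont H 0"
    unfolding H_def by (intro continuous_intros cl)
  then have lim: "(H \<longlongrightarrow> H 0) (at 0)" by (simp add: isCont_def)
  have ev1: "\<forall>\<^sub>F s in at (0::real). e \<notin> G \<longrightarrow> s * v $ e + u $ e \<noteq> 0" for e
  proof (cases "e \<in> G")
    case False
    then have "u $ e \<noteq> 0" using u by auto
    moreover have "((\<lambda>s. s * v $ e + u $ e) \<longlongrightarrow> 0 * v $ e + u $ e) (at 0)"
      by (intro tendsto_intros)
    ultimately have "\<forall>\<^sub>F s in at (0::real). s * v $ e + u $ e \<noteq> 0"
      using tendsto_imp_eventually_ne by fastforce
    then show ?thesis by (rule eventually_mono) auto
  qed simp
  have "\<forall>\<^sub>F s in at (0::real). (\<forall>e. e \<notin> G \<longrightarrow> s * v $ e + u $ e \<noteq> 0) \<and> s \<noteq> 0"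
    using eventually_all_finite[OF ev1] eventually_at_filter by (auto elim: eventually_mono simp: eventually_conj_iff eventually_at_filter)
  then have ev: "\<forall>\<^sub>F s in at (0::real). H s = 0"
  proof (rule eventually_mono)
    fix s :: real assume s: "(\<forall>e. e \<notin> G \<longrightarrow> s * v $ e + u $ e \<noteq> 0) \<and> s \<noteq> 0"
    define w where "w = v + (1/s) *\<^sub>R u"
    have wV: "w \<in> V" unfolding w_def using V v u by (intro subspace_add subspace_scale) auto
    have fac: "X e ^ a e * lam s e ^ (d e - a e) = lam s e ^ d e * (w $ e) ^ a e"
      if "a e \<le> d e" for a e
    proof (cases "e \<in> G")
      case True
      then have "u $ e = 0" using u by auto
      with True show ?thesis by (simp add: X_def lam_def w_def)
    next
      case False
      have nz: "s * v $ e + u $ e \<noteq> 0" "s \<noteq> 0" using False s by auto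
      have "lam s e * w $ e = s / (s * v $ e + u $ e) * ((s * v $ e + u $ e) / s)"
        using False nz by (simp add: lam_def w_def field_simps)
      also have "\<dots> = 1" using nz by simp
      finally have "lam s e * w $ e = 1" .
      have "lam s e ^ d e * (w $ e) ^ a e = lam s e ^ (d e - a e) * (lam s e * w $ e) ^ a e"
        using that by (simp add: power_mult_distrib power_add[symmetric])
      then show ?thesis using \<open>lam s e * w $ e = 1\<close> False by (simp add: X_def)
    qed
    have "H s = (\<Sum>a\<in>S. c a * ((\<Prod>e\<in>UNIV. lam s e ^ d e) * (\<Prod>e\<in>UNIV. (w $ e) ^ a e)))"
      unfolding H_def
    proof (rule sum.cong[OF refl])
      fix a assume "a \<in> S"
      then have "\<forall>e. a e \<le> d e" using mh by (auto simp: mh_poly_def)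
      then show "c a * (\<Prod>e\<in>UNIV. X e ^ a e * lam s e ^ (d e - a e)) =
          c a * ((\<Prod>e\<in>UNIV. lam s e ^ d e) * (\<Prod>e\<in>UNIV. w $ e ^ a e))"
        by (simp add: fac prod.distrib)
    qed
    also have "\<dots> = (\<Prod>e\<in>UNIV. lam s e ^ d e) * mh_eval d S c (embed_P1 w)"
      by (simp add: eval_embed sum_distrib_left mult.assoc mult.left_commute)
    also have "\<dots> = 0" using van wV by auto
    finally show "H s = 0" .
  qed
  have "(H \<longlongrightarrow> 0) (at 0)"
    using ev by (rule tendsto_eventually)
  with lim have "H 0 = 0" using tendsto_unique at_neq_bot by blast
  then show "mh_eval d S c p = 0" using H0 by simp
qed

lemma sub_part:
  assumes V: "subspace V" and pY: "p \<in> schubert_variety V"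
    and fin: "\<And>e. e \<in> G \<Longrightarrow> \<exists>r. p e = Fin r"
  shows "\<exists>v\<in>V. \<forall>e\<in>G. p e = Fin (v $ e)"
proof -
  define pr where "pr v = (\<chi> e. if e \<in> G then v $ e else 0)" for v :: "real ^ 'a"
  define W where "W = pr ` V"
  have lin: "linear pr" unfolding pr_def by (auto intro!: linearI simp: vec_eq_iff)
  have sW: "subspace W" unfolding W_def using V lin by (simp add: linear_subspace_image)
  define x where "x = (\<chi> e. if e \<in> G then hx (p e) else 0)"
  have "x \<in> W"
  proof (rule ccontr)
    assume nx: "x \<notin> W"
    obtain y z where y: "y \<in> span W" and z: "\<And>w. w \<in> span W \<Longrightarrow> orthogonal z w" and xyz: "x = y + z"
      using orthogonal_subspace_decomp_exists[of W x] by blast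
    have "z \<noteq> 0" using nx xyz y sW by (metis add.right_neutral span_eq_iff)
    have zx: "inner z x \<noteq> 0"
    proof -
      have "inner z y = 0" using z[OF y] by (simp add: orthogonal_def)
      then have "inner z x = inner z z" using xyz by (simp add: inner_add_right)
      then show ?thesis using \<open>z \<noteq> 0\<close> by simp
    qed
    define \<delta> where "\<delta> e = (\<lambda>f::'a. if f = e then 1 else 0 :: nat)" for e
    define d where "d f = (if f \<in> G then 1 else 0 :: nat)" for f :: 'a
    define S where "S = \<delta> ` G"
    define c where "c a = (\<Sum>e\<in>G. if a = \<delta> e then z $ e else 0)" for a
    have inj: "inj_on \<delta> G" by (auto simp: inj_on_def \<delta>_def fun_eq_iff split: if_splits)
    have ce: "c (\<delta> e) = z $ e" if "e \<in> G" for e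
    proof -
      have "\<And>e'. (\<delta> e = \<delta> e') = (e' = e)" by (auto simp: \<delta>_def fun_eq_iff)
      then show ?thesis using that by (simp add: c_def)
    qed
    have mh: "mh_poly d S" by (auto simp: mh_poly_def S_def \<delta>_def d_def)
    have evq: "mh_eval d S c q = (\<Sum>e\<in>G. z $ e * hx (q e))"
      if hyq: "\<And>f. f \<in> G \<Longrightarrow> hy (q f) = 1" for q
    proof -
      have pe: "(\<Prod>f\<in>UNIV. hx (q f) ^ \<delta> e f * hy (q f) ^ (d f - \<delta> e f)) = hx (q e)"
        if "e \<in> G" for e
      proof -
        have "(\<Prod>f\<in>UNIV. hx (q f) ^ \<delta> e f * hy (q f) ^ (d f - \<delta> e f)) = (\<Prod>f\<in>UNIV. if f = e then hx (q e) else 1)"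
          using that hyq by (intro prod.cong) (auto simp: \<delta>_def d_def)
        then show ?thesis by simp
      qed
      show ?thesis unfolding mh_eval_def S_def
        by (simp add: sum.reindex[OF inj] ce pe)
    qed
    have "\<forall>q\<in>embed_P1 ` V. mh_eval d S c q = 0"
    proof
      fix q assume "q \<in> embed_P1 ` V"
      then obtain v where v: "v \<in> V" "q = embed_P1 v" by auto
      have "mh_eval d S c q = (\<Sum>e\<in>G. z $ e * v $ e)"
        by (subst evq) (auto simp: v embed_P1_def)
      also have "\<dots> = inner z (pr v)"
        by (simp add: inner_vec_def pr_def if_distrib sum.If_cases)
      also have "\<dots> = 0" using z[of "pr v"] v sW by (auto simp: W_def orthogonal_def intro: span_base)
      finally show "mh_eval d S c q = 0" .
    qed
    then have "mh_eval d S c p = 0"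
      using pY mh unfolding schubert_variety_def zariski_closure_P1_def by blast
    moreover have "mh_eval d S c p = inner z x"
    proof -
      have "\<And>f. f \<in> G \<Longrightarrow> hy (p f) = 1" using fin by fastforce
      then have "mh_eval d S c p = (\<Sum>e\<in>G. z $ e * hx (p e))" by (rule evq)
      also have "\<dots> = inner z x"
        by (simp add: inner_vec_def x_def if_distrib sum.If_cases)
      finally show ?thesis .
    qed
    ultimately show False using zx by simp
  qed
  then obtain v where v: "v \<in> V" "x = pr v" by (auto simp: W_def)
  have "p e = Fin (v $ e)" if "e \<in> G" for e
  proof -
    have "hx (p e) = v $ e" using arg_cong[OF v(2), of "\<lambda>y. y $ e"] that by (simp add: x_def pr_def)
    then show ?thesis using fin[OF that] by auto
  qed
  then show ?thesis using v by blast
qed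

theorem lemma3p1:
  fixes V :: "(real ^ 'e::finite) set" and F G :: "'e set"
  assumes "subspace V"
    and "is_flat V F" and "is_flat V G" and "F \<subseteq> G"
  shows "(schubert_variety V \<inter>
           {p. (\<forall>e\<in>F. p e = Fin 0) \<and> (\<forall>e\<in>G - F. \<exists>r>0. p e = Fin r) \<and> (\<forall>e. e \<notin> G \<longrightarrow> p e = Infty)}
         = {p. (\<exists>v\<in>V. \<forall>e\<in>G. p e = Fin (v $ e))
               \<and> (\<forall>e\<in>F. p e = Fin 0) \<and> (\<forall>e\<in>G - F. \<exists>r>0. p e = Fin r) \<and> (\<forall>e. e \<notin> G \<longrightarrow> p e = Infty)})
       \<and> (schubert_variety V \<inter>
           {p. (\<forall>e\<in>F. p e = Fin 0) \<and> (\<forall>e\<in>G - F. \<exists>r>0. p e = Fin r) \<and> (\<forall>e. e \<notin> G \<longrightarrow> p e = Infty)}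
         \<noteq> {} \<longleftrightarrow> acyclic_flat_restr V G F)"
proof -
  let ?B = "{p. (\<forall>e\<in>F. p e = Fin 0) \<and> (\<forall>e\<in>G - F. \<exists>r>0. p e = Fin r) \<and> (\<forall>e. e \<notin> G \<longrightarrow> p e = Infty)}"
  let ?R = "{p. (\<exists>v\<in>V. \<forall>e\<in>G. p e = Fin (v $ e))
               \<and> (\<forall>e\<in>F. p e = Fin 0) \<and> (\<forall>e\<in>G - F. \<exists>r>0. p e = Fin r) \<and> (\<forall>e. e \<notin> G \<longrightarrow> p e = Infty)}"
  have eq: "schubert_variety V \<inter> ?B = ?R"
  proof
    show "schubert_variety V \<inter> ?B \<subseteq> ?R"
    proof
      fix p assume p: "p \<in> schubert_variety V \<inter> ?B"
      have "\<And>e. e \<in> G \<Longrightarrow> \<exists>r. p e = Fin r"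
      proof -
        fix e assume "e \<in> G"
        then show "\<exists>r. p e = Fin r" using p by (cases "e \<in> F") auto
      qed
      then have "\<exists>v\<in>V. \<forall>e\<in>G. p e = Fin (v $ e)" using sub_part[OF assms(1)] p by blast
      then show "p \<in> ?R" using p by blast
    qed
  next
    show "?R \<subseteq> schubert_variety V \<inter> ?B"
    proof
      fix p assume p: "p \<in> ?R"
      then obtain v where v: "v \<in> V" "\<forall>e\<in>G. p e = Fin (v $ e)" by blast
      have "\<And>e. p e = (if e \<in> G then Fin (v $ e) else Infty)" using v p by auto
      then have "p \<in> schubert_variety V" using sup_part[OF assms(1) assms(3) v(1)] by blast
      then show "p \<in> schubert_variety V \<inter> ?B" using p by blast
    qed
  qed
  have ne: "?R \<noteq> {} \<longleftrightarrow> acyclic_flat_restr V G F"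
  proof
    assume "?R \<noteq> {}"
    then obtain p where p: "p \<in> ?R" by blast
    then obtain v where v: "v \<in> V" "\<forall>e\<in>G. p e = Fin (v $ e)" by blast
    have "\<forall>e\<in>G. sign_vec v e = (if e \<in> F then Zero else Pos)"
    proof
      fix e assume e: "e \<in> G"
      show "sign_vec v e = (if e \<in> F then Zero else Pos)"
      proof (cases "e \<in> F")
        case True then show ?thesis using p v e by (auto simp: sign_vec_def sign_of_def)
      next
        case False
        then obtain r where "r > 0" "p e = Fin r" using p e by blast
        then show ?thesis using False v e by (auto simp: sign_vec_def sign_of_def)
      qed
    qed
    then have "(\<lambda>e. if e \<in> G then Some (if e \<in> F then Zero else Pos) else None)
        = (\<lambda>e. if e \<in> G then Some (sign_vec v e) else None)" by auto
    then show "acyclic_flat_restr V G F" using v assms(4)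
      unfolding acyclic_flat_restr_def restr_covectors_def covectors_def by blast
  next
    assume "acyclic_flat_restr V G F"
    then obtain v where v: "v \<in> V" and eqf: "(\<lambda>e. if e \<in> G then Some (if e \<in> F then Zero else Pos) else None)
        = (\<lambda>e. if e \<in> G then Some (sign_vec v e) else None)"
      unfolding acyclic_flat_restr_def restr_covectors_def covectors_def by blast
    have sv: "sign_vec v e = (if e \<in> F then Zero else Pos)" if "e \<in> G" for e
      using fun_cong[OF eqf, of e] that by simp
    define p where "p e = (if e \<in> G then Fin (v $ e) else Infty)" for e
    have "p \<in> ?R"
    proof -
      have "\<forall>e\<in>F. p e = Fin 0"
      proof
        fix e assume e: "e \<in> F"
        then have "e \<in> G" using assms(4) by auto
        then have "v $ e = 0" using sv[of e] e by (auto simp: sign_vec_def sign_of_def split: if_splits)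
        then show "p e = Fin 0" using \<open>e \<in> G\<close> by (simp add: p_def)
      qed
      moreover have "\<forall>e\<in>G - F. \<exists>r>0. p e = Fin r"
      proof
        fix e assume e: "e \<in> G - F"
        then have "v $ e > 0" using sv[of e] by (auto simp: sign_vec_def sign_of_def split: if_splits)
        then show "\<exists>r>0. p e = Fin r" using e by (auto simp: p_def)
      qed
      ultimately show ?thesis using v by (auto simp: p_def)
    qed
    then show "?R \<noteq> {}" by blast
  qed
  show ?thesis using eq ne by simp
qed

end
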